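(* Consider an RBM with observed variables $X\in\{-1,1\}^n$ and parameters $J,h,g$ as in the context. Fix an observed variable $u$ and subsets $I,S\subseteq[n]$ such that $\{u\},I,S$ are pairwise disjoint, and assignments $x_u,x_I,x_S$. Then \[\nu_{u,I|S}(x_u,x_I|x_S)=\Big|\sum_{q\in\{-1,1\}^m}\bar f(q,x_u,x_S)\prod_{i\in I}\sigma(2x_i(J^{(i)}\cdot q+h_i))\Big|,\] where \[\bar f(q,x_u,x_S)=\lambda(q,x_S)\Big[\sigma(2x_u(J^{(u)}\cdot q+h_u))-\mathbb{E}_{q'\sim\lambda(\cdot,x_S)}\sigma(2x_u(J^{(u)}\cdot q'+h_u))\Big],\] \[\lambda(q,x_S)=\frac{e^{g\cdot q}\prod_{i\in S}e^{x_i(J^{(i)}\cdot q+h_i)}\prod_{i\in[n]\setminus S}\cosh(J^{(i)}\cdot q+h_i)}{\sum_{q'\in\{-1,1\}^m}e^{g\cdot q'}\prod_{i\in S}e^{x_i(J^{(i)}\cdot q'+h_i)}\prod_{i\in[n]\setminus S}\cosh(J^{(i)}\cdot q'+h_i)}.\]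
   Context: RBM: $\mathbb{P}(X=x,Y=y)\propto\exp(x^TJy+h^Tx+g^Ty)$ over observed $X\in\{-1,1\}^n$, latent $Y\in\{-1,1\}^m$, $J\in\mathbb{R}^{n\times m}$, $h\in\mathbb{R}^n$, $g\in\mathbb{R}^m$; probabilities refer to the marginal of $X$. $J^{(i)}$ is the $i$-th row of $J$, $\sigma(t)=1/(1+e^{-t})$. $\nu_{u,I|S}(x_u,x_I|x_S):=|\mathbb{P}(X_u=x_u,X_I=x_I|X_S=x_S)-\mathbb{P}(X_u=x_u|X_S=x_S)\mathbb{P}(X_I=x_I|X_S=x_S)|$. $\mathbb{E}_{q'\sim\lambda(\cdot,x_S)}$ denotes expectation over $q'\in\{-1,1\}^m$ drawn with probability $\lambda(q',x_S)$. *)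

theory Defs
  imports Complex_Main "HOL-Library.FuncSet"
begin

definition spins :: "nat \<Rightarrow> (nat \<Rightarrow> real) set" where
  "spins k = ({0..<k} \<rightarrow>\<^sub>E {-1, 1})"

definition sigmoid :: "real \<Rightarrow> real" where
  "sigmoid t = 1 / (1 + exp (- t))"

definition row_dot :: "nat \<Rightarrow> (nat \<Rightarrow> nat \<Rightarrow> real) \<Rightarrow> nat \<Rightarrow> (nat \<Rightarrow> real) \<Rightarrow> real" where
  "row_dot m J i q = (\<Sum>j<m. J i j * q j)"

definition rbm_weight ::
  "nat \<Rightarrow> nat \<Rightarrow> (nat \<Rightarrow> nat \<Rightarrow> real) \<Rightarrow> (nat \<Rightarrow> real) \<Rightarrow> (nat \<Rightarrow> real)
   \<Rightarrow> (nat \<Rightarrow> real) \<Rightarrow> (nat \<Rightarrow> real) \<Rightarrow> real" where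
  "rbm_weight n m J h g x y =
     exp ((\<Sum>i<n. \<Sum>j<m. x i * J i j * y j) + (\<Sum>i<n. h i * x i) + (\<Sum>j<m. g j * y j))"

definition rbm_prob ::
  "nat \<Rightarrow> nat \<Rightarrow> (nat \<Rightarrow> nat \<Rightarrow> real) \<Rightarrow> (nat \<Rightarrow> real) \<Rightarrow> (nat \<Rightarrow> real)
   \<Rightarrow> ((nat \<Rightarrow> real) \<Rightarrow> bool) \<Rightarrow> real" where
  "rbm_prob n m J h g E =
     (\<Sum>x\<in>{x\<in>spins n. E x}. \<Sum>y\<in>spins m. rbm_weight n m J h g x y) /
     (\<Sum>x\<in>spins n. \<Sum>y\<in>spins m. rbm_weight n m J h g x y)"

definition rbm_cond ::
  "nat \<Rightarrow> nat \<Rightarrow> (nat \<Rightarrow> nat \<Rightarrow> real) \<Rightarrow> (nat \<Rightarrow> real) \<Rightarrow> (nat \<Rightarrow> real)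
   \<Rightarrow> ((nat \<Rightarrow> real) \<Rightarrow> bool) \<Rightarrow> ((nat \<Rightarrow> real) \<Rightarrow> bool) \<Rightarrow> real" where
  "rbm_cond n m J h g E F =
     rbm_prob n m J h g (\<lambda>x. E x \<and> F x) / rbm_prob n m J h g F"

definition rbm_nu ::
  "nat \<Rightarrow> nat \<Rightarrow> (nat \<Rightarrow> nat \<Rightarrow> real) \<Rightarrow> (nat \<Rightarrow> real) \<Rightarrow> (nat \<Rightarrow> real)
   \<Rightarrow> nat \<Rightarrow> nat set \<Rightarrow> nat set \<Rightarrow> real \<Rightarrow> (nat \<Rightarrow> real) \<Rightarrow> (nat \<Rightarrow> real) \<Rightarrow> real" where
  "rbm_nu n m J h g u I S xu xI xS =
     (let EU = (\<lambda>x. x u = xu); EI = (\<lambda>x. \<forall>i\<in>I. x i = xI i); ES = (\<lambda>x. \<forall>i\<in>S. x i = xS i)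
      in \<bar>rbm_cond n m J h g (\<lambda>x. EU x \<and> EI x) ES
           - rbm_cond n m J h g EU ES * rbm_cond n m J h g EI ES\<bar>)"

definition lam_num ::
  "nat \<Rightarrow> nat \<Rightarrow> (nat \<Rightarrow> nat \<Rightarrow> real) \<Rightarrow> (nat \<Rightarrow> real) \<Rightarrow> (nat \<Rightarrow> real)
   \<Rightarrow> nat set \<Rightarrow> (nat \<Rightarrow> real) \<Rightarrow> (nat \<Rightarrow> real) \<Rightarrow> real" where
  "lam_num n m J h g S xS q =
     exp (\<Sum>j<m. g j * q j)
     * (\<Prod>i\<in>S. exp (xS i * (row_dot m J i q + h i)))
     * (\<Prod>i\<in>{0..<n} - S. cosh (row_dot m J i q + h i))"

definition lam ::
  "nat \<Rightarrow> nat \<Rightarrow> (nat \<Rightarrow> nat \<Rightarrow> real) \<Rightarrow> (nat \<Rightarrow> real) \<Rightarrow> (nat \<Rightarrow> real)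
   \<Rightarrow> nat set \<Rightarrow> (nat \<Rightarrow> real) \<Rightarrow> (nat \<Rightarrow> real) \<Rightarrow> real" where
  "lam n m J h g S xS q =
     lam_num n m J h g S xS q / (\<Sum>q'\<in>spins m. lam_num n m J h g S xS q')"

definition fbar ::
  "nat \<Rightarrow> nat \<Rightarrow> (nat \<Rightarrow> nat \<Rightarrow> real) \<Rightarrow> (nat \<Rightarrow> real) \<Rightarrow> (nat \<Rightarrow> real)
   \<Rightarrow> nat \<Rightarrow> nat set \<Rightarrow> (nat \<Rightarrow> real) \<Rightarrow> real \<Rightarrow> (nat \<Rightarrow> real) \<Rightarrow> real" where
  "fbar n m J h g u S q xu xS =
     lam n m J h g S xS q *
     (sigmoid (2 * xu * (row_dot m J u q + h u))
      - (\<Sum>q'\<in>spins m. lam n m J h g S xS q' * sigmoid (2 * xu * (row_dot m J u q' + h u))))"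

end

theory Submission imports Defs begin

lemma spins_fin: "finite (spins k)"
  unfolding spins_def by (rule finite_PiE) auto

lemma spins_ne: "spins k \<noteq> {}"
  unfolding spins_def by (simp add: PiE_eq_empty_iff)

lemma weight_eq:
  "rbm_weight n m J h g x y = exp (\<Sum>j<m. g j * y j) * (\<Prod>i<n. exp (x i * (row_dot m J i y + h i)))"
proof -
  have "(\<Sum>i<n. \<Sum>j<m. x i * J i j * y j) + (\<Sum>i<n. h i * x i) = (\<Sum>i<n. x i * (row_dot m J i y + h i))"
    by (simp add: row_dot_def sum_distrib_left sum.distrib algebra_simps mult.assoc)
  then show ?thesis unfolding rbm_weight_def
    by (simp add: exp_add exp_sum mult.commute)
qed

lemma set_eq:
  assumes "B \<subseteq> {0..<n}" "\<forall>i\<in>B. d i \<in> {-1,1}"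
  shows "{x\<in>spins n. \<forall>i\<in>B. x i = d i} = PiE {0..<n} (\<lambda>i. if i\<in>B then {d i} else {-1,1})"
  using assms unfolding spins_def
  apply (auto simp: PiE_iff extensional_def split: if_splits)
  by (metis atLeastLessThan_iff zero_le)

lemma sum_prod_eq:
  fixes f :: "nat \<Rightarrow> real \<Rightarrow> real"
  assumes "B \<subseteq> {0..<n}" "\<forall>i\<in>B. d i \<in> {-1,1}"
  shows "(\<Sum>x\<in>{x\<in>spins n. \<forall>i\<in>B. x i = d i}. \<Prod>i<n. f i (x i))
     = (\<Prod>i<n. if i\<in>B then f i (d i) else f i 1 + f i (-1))"
proof -
  have "(\<Prod>i<n. if i\<in>B then f i (d i) else f i 1 + f i (-1))
     = (\<Prod>i\<in>{0..<n}. \<Sum>b\<in>(if i\<in>B then {d i} else {-1,1}). f i b)"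
    by (intro prod.cong) (auto simp: atLeast0LessThan)
  also have "\<dots> = (\<Sum>x\<in>PiE {0..<n} (\<lambda>i. if i\<in>B then {d i} else {-1,1}). \<Prod>i\<in>{0..<n}. f i (x i))"
    by (rule prod_sum_PiE) auto
  finally show ?thesis using set_eq[OF assms] by (simp add: atLeast0LessThan)
qed

lemma exp_sig:
  assumes "c \<in> {-1,1::real}"
  shows "exp (c * a) = 2 * cosh a * sigmoid (2 * c * a)"
proof -
  have e: "exp (-(a*2)) = exp (-a) * exp (-a)" "exp (a*2) = exp a * exp a"
    by (simp_all add: exp_add[symmetric])
  have p: "exp a * exp (-a) = 1" by (simp add: exp_minus)
  have q1: "exp (- a) * (2 + 2 * exp (a * 2)) = exp a * 2 + 2 * exp (- a)"
    unfolding e using p by (simp add: algebra_simps)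
  have q2: "exp a * (2 + 2 * exp (-(a * 2))) = exp a * 2 + 2 * exp (- a)"
    unfolding e using p by (simp add: algebra_simps)
  have pos1: "2 + 2 * exp (a * 2) \<noteq> 0" "2 + 2 * exp (-(a * 2)) \<noteq> 0"
    by (smt (verit) exp_gt_zero)+
  show ?thesis using assms
    apply (auto simp: cosh_def sigmoid_def field_simps)
    using q1 q2 pos1 by (simp_all add: eq_divide_eq)
qed

definition Kf :: "nat \<Rightarrow> nat \<Rightarrow> (nat \<Rightarrow> nat \<Rightarrow> real) \<Rightarrow> (nat \<Rightarrow> real) \<Rightarrow> (nat \<Rightarrow> real)
   \<Rightarrow> nat set \<Rightarrow> (nat \<Rightarrow> real) \<Rightarrow> (nat \<Rightarrow> real) \<Rightarrow> real" where
  "Kf n m J h g S xS q = exp (\<Sum>j<m. g j * q j) *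
     (\<Prod>i<n. if i\<in>S then exp (xS i * (row_dot m J i q + h i)) else 2 * cosh (row_dot m J i q + h i))"

lemma NA:
  assumes A: "A \<subseteq> {0..<n}" and S: "S \<subseteq> {0..<n}" and AS: "A \<inter> S = {}"
    and c: "\<forall>i\<in>A. c i \<in> {-1,1}" and xS: "\<forall>i\<in>S. xS i \<in> {-1,1}"
  shows "(\<Sum>x\<in>{x\<in>spins n. (\<forall>i\<in>A. x i = c i) \<and> (\<forall>i\<in>S. x i = xS i)}. \<Sum>y\<in>spins m. rbm_weight n m J h g x y)
    = (\<Sum>q\<in>spins m. Kf n m J h g S xS q * (\<Prod>i\<in>A. sigmoid (2 * c i * (row_dot m J i q + h i))))"
proof -
  define d where "d = (\<lambda>i. if i\<in>A then c i else xS i)"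
  have dset: "\<forall>i\<in>A\<union>S. d i \<in> {-1,1}" using c xS by (auto simp: d_def)
  have ASsub: "A \<union> S \<subseteq> {0..<n}" using A S by auto
  have seteq: "{x\<in>spins n. (\<forall>i\<in>A. x i = c i) \<and> (\<forall>i\<in>S. x i = xS i)} = {x\<in>spins n. \<forall>i\<in>A\<union>S. x i = d i}"
    using AS by (auto simp: d_def)
  have inner: "(\<Sum>x\<in>{x\<in>spins n. \<forall>i\<in>A\<union>S. x i = d i}. rbm_weight n m J h g x y)
      = Kf n m J h g S xS y * (\<Prod>i\<in>A. sigmoid (2 * c i * (row_dot m J i y + h i)))" for y
  proof -
    let ?a = "\<lambda>i. row_dot m J i y + h i"
    have "(\<Sum>x\<in>{x\<in>spins n. \<forall>i\<in>A\<union>S. x i = d i}. rbm_weight n m J h g x y)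
       = exp (\<Sum>j<m. g j * y j) * (\<Sum>x\<in>{x\<in>spins n. \<forall>i\<in>A\<union>S. x i = d i}. \<Prod>i<n. exp (x i * ?a i))"
      by (simp add: weight_eq sum_distrib_left)
    also have "(\<Sum>x\<in>{x\<in>spins n. \<forall>i\<in>A\<union>S. x i = d i}. \<Prod>i<n. exp (x i * ?a i))
       = (\<Prod>i<n. if i\<in>A\<union>S then exp (d i * ?a i) else exp (1 * ?a i) + exp ((-1) * ?a i))"
      by (rule sum_prod_eq[OF ASsub dset])
    also have "\<dots> = (\<Prod>i<n. (if i\<in>S then exp (xS i * ?a i) else 2 * cosh (?a i))
                         * (if i\<in>A then sigmoid (2 * c i * ?a i) else 1))"
    proof (rule prod.cong[OF refl])
      fix i assume "i \<in> {..<n}"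
      show "(if i\<in>A\<union>S then exp (d i * ?a i) else exp (1 * ?a i) + exp ((-1) * ?a i))
         = (if i\<in>S then exp (xS i * ?a i) else 2 * cosh (?a i)) * (if i\<in>A then sigmoid (2 * c i * ?a i) else 1)"
        using AS c exp_sig[of "c i" "?a i"] by (auto simp: d_def cosh_def)
    qed
    also have "\<dots> = (\<Prod>i<n. if i\<in>S then exp (xS i * ?a i) else 2 * cosh (?a i))
                     * (\<Prod>i<n. if i\<in>A then sigmoid (2 * c i * ?a i) else 1)"
      by (rule prod.distrib)
    also have "(\<Prod>i<n. if i\<in>A then sigmoid (2 * c i * ?a i) else 1) = (\<Prod>i\<in>A. sigmoid (2 * c i * ?a i))"
    proof -
      have "{i\<in>{..<n}. i\<in>A} = A" using A by auto
      then show ?thesis using prod.inter_filter[of "{..<n}" "\<lambda>i. sigmoid (2 * c i * ?a i)" "\<lambda>i. i\<in>A"]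
        by simp
    qed
    finally show ?thesis by (simp add: Kf_def)
  qed
  show ?thesis unfolding seteq
    by (subst sum.swap) (simp add: inner)
qed

lemma Kf_eq:
  assumes S: "S \<subseteq> {0..<n}"
  shows "Kf n m J h g S xS q = 2 ^ card ({0..<n} - S) * lam_num n m J h g S xS q"
proof -
  let ?a = "\<lambda>i. row_dot m J i q + h i"
  have "(\<Prod>i<n. if i\<in>S then exp (xS i * ?a i) else 2 * cosh (?a i))
     = (\<Prod>i\<in>{..<n} \<inter> {x. x\<in>S}. exp (xS i * ?a i)) * (\<Prod>i\<in>{..<n} \<inter> - {x. x\<in>S}. 2 * cosh (?a i))"
    by (rule prod.If_cases) simp
  also have "{..<n} \<inter> {x. x\<in>S} = S" using S by auto
  also have "{..<n} \<inter> - {x. x\<in>S} = {0..<n} - S" by auto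
  also have "(\<Prod>i\<in>{0..<n} - S. 2 * cosh (?a i)) = 2 ^ card ({0..<n} - S) * (\<Prod>i\<in>{0..<n} - S. cosh (?a i))"
    by (simp add: prod.distrib)
  finally show ?thesis by (simp add: Kf_def lam_num_def)
qed

lemma Z_pos: "(\<Sum>x\<in>spins n. \<Sum>y\<in>spins m. rbm_weight n m J h g x y) > 0"
  by (intro sum_pos spins_fin spins_ne) (auto simp: rbm_weight_def)

lemma cond_formula:
  assumes A: "A \<subseteq> {0..<n}" and S: "S \<subseteq> {0..<n}" and AS: "A \<inter> S = {}"
    and c: "\<forall>i\<in>A. c i \<in> {-1,1}" and xS: "\<forall>i\<in>S. xS i \<in> {-1,1}"
  shows "rbm_cond n m J h g (\<lambda>x. \<forall>i\<in>A. x i = c i) (\<lambda>x. \<forall>i\<in>S. x i = xS i)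
     = (\<Sum>q\<in>spins m. lam n m J h g S xS q * (\<Prod>i\<in>A. sigmoid (2 * c i * (row_dot m J i q + h i))))"
proof -
  let ?Z = "\<Sum>x\<in>spins n. \<Sum>y\<in>spins m. rbm_weight n m J h g x y"
  let ?P = "\<lambda>q. \<Prod>i\<in>A. sigmoid (2 * c i * (row_dot m J i q + h i))"
  let ?C = "(2::real) ^ card ({0..<n} - S)"
  have Z: "?Z \<noteq> 0" using Z_pos by (metis less_irrefl)
  note N1 = NA[OF A S AS c xS, of m J h g]
  have N0: "(\<Sum>x\<in>{x\<in>spins n. \<forall>i\<in>S. x i = xS i}. \<Sum>y\<in>spins m. rbm_weight n m J h g x y)
     = (\<Sum>q\<in>spins m. Kf n m J h g S xS q)"
    using NA[of "{}" n S c xS m J h g] S xS by simp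
  have "rbm_cond n m J h g (\<lambda>x. \<forall>i\<in>A. x i = c i) (\<lambda>x. \<forall>i\<in>S. x i = xS i)
     = (\<Sum>q\<in>spins m. Kf n m J h g S xS q * ?P q) / (\<Sum>q\<in>spins m. Kf n m J h g S xS q)"
    unfolding rbm_cond_def rbm_prob_def using N1 N0 Z by simp
  also have "\<dots> = (?C * (\<Sum>q\<in>spins m. lam_num n m J h g S xS q * ?P q)) / (?C * (\<Sum>q\<in>spins m. lam_num n m J h g S xS q))"
    by (simp add: Kf_eq[OF S] sum_distrib_left mult.assoc)
  also have "\<dots> = (\<Sum>q\<in>spins m. lam_num n m J h g S xS q * ?P q) / (\<Sum>q\<in>spins m. lam_num n m J h g S xS q)"
    by simp
  also have "\<dots> = (\<Sum>q\<in>spins m. lam n m J h g S xS q * ?P q)"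
    by (simp add: lam_def sum_divide_distrib)
  finally show ?thesis .
qed

theorem lemma7:
  fixes n m :: nat and J :: "nat \<Rightarrow> nat \<Rightarrow> real" and h g :: "nat \<Rightarrow> real"
    and u :: nat and I S :: "nat set" and xu :: real and xI xS :: "nat \<Rightarrow> real"
  assumes "u < n" and "I \<subseteq> {0..<n}" and "S \<subseteq> {0..<n}"
    and "u \<notin> I" and "u \<notin> S" and "I \<inter> S = {}"
    and "xu \<in> {-1, 1}" and "\<forall>i\<in>I. xI i \<in> {-1, 1}" and "\<forall>i\<in>S. xS i \<in> {-1, 1}"
  shows "rbm_nu n m J h g u I S xu xI xS =
         \<bar>\<Sum>q\<in>spins m. fbar n m J h g u S q xu xS
             * (\<Prod>i\<in>I. sigmoid (2 * xI i * (row_dot m J i q + h i)))\<bar>"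
proof -
  let ?L = "lam n m J h g S xS"
  let ?su = "\<lambda>q. sigmoid (2 * xu * (row_dot m J u q + h u))"
  let ?P = "\<lambda>q. \<Prod>i\<in>I. sigmoid (2 * xI i * (row_dot m J i q + h i))"
  let ?ES = "\<lambda>x. \<forall>i\<in>S. x i = xS i"
  have finI: "finite I" using assms(2) finite_subset by blast
  have e1: "(\<lambda>x. x u = xu \<and> (\<forall>i\<in>I. x i = xI i)) = (\<lambda>x. \<forall>i\<in>insert u I. x i = (xI(u:=xu)) i)"
    using assms(4) by (auto simp: fun_eq_iff)
  have e2: "(\<lambda>x. x u = xu) = (\<lambda>x. \<forall>i\<in>{u}. x i = (\<lambda>_. xu) i)" by auto
  have c1: "rbm_cond n m J h g (\<lambda>x. x u = xu \<and> (\<forall>i\<in>I. x i = xI i)) ?ES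
     = (\<Sum>q\<in>spins m. ?L q * (?su q * ?P q))"
  proof -
    have "rbm_cond n m J h g (\<lambda>x. x u = xu \<and> (\<forall>i\<in>I. x i = xI i)) ?ES
       = (\<Sum>q\<in>spins m. ?L q * (\<Prod>i\<in>insert u I. sigmoid (2 * (xI(u:=xu)) i * (row_dot m J i q + h i))))"
      unfolding e1 using assms by (intro cond_formula) auto
    also have "\<dots> = (\<Sum>q\<in>spins m. ?L q * (?su q * ?P q))"
    proof (rule sum.cong[OF refl])
      fix q
      have "(\<Prod>i\<in>I. sigmoid (2 * (xI(u:=xu)) i * (row_dot m J i q + h i))) = ?P q"
        using assms(4) by (intro prod.cong) auto
      then show "?L q * (\<Prod>i\<in>insert u I. sigmoid (2 * (xI(u:=xu)) i * (row_dot m J i q + h i))) = ?L q * (?su q * ?P q)"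
        using finI assms(4) by simp
    qed
    finally show ?thesis .
  qed
  have c2: "rbm_cond n m J h g (\<lambda>x. x u = xu) ?ES = (\<Sum>q\<in>spins m. ?L q * ?su q)"
    unfolding e2 using assms cond_formula[of "{u}" n S "\<lambda>_. xu" xS m J h g] by simp
  have c3: "rbm_cond n m J h g (\<lambda>x. \<forall>i\<in>I. x i = xI i) ?ES = (\<Sum>q\<in>spins m. ?L q * ?P q)"
    using assms by (intro cond_formula) auto
  have "(\<Sum>q\<in>spins m. fbar n m J h g u S q xu xS * ?P q)
     = (\<Sum>q\<in>spins m. ?L q * (?su q * ?P q)) - (\<Sum>q\<in>spins m. ?L q * ?su q) * (\<Sum>q\<in>spins m. ?L q * ?P q)"
    by (simp add: fbar_def algebra_simps sum_subtractf sum_distrib_left sum_distrib_right)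
  then show ?thesis unfolding rbm_nu_def Let_def c1 c2 c3 by simp
qed

end
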